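(* Let ${\bf S}\in\{{\bf Tmd},{\bf Tm4d}\}$. Then ${\bf S}$ cannot be characterized by a single finite deterministic logical matrix; that is, there is no logical matrix $\mathcal M=\langle M,D\rangle$ with $M$ finite such that, for all $\Gamma\cup\{\alpha\}\subseteq For$, $\Gamma\vdash_{\bf S}\alpha$ iff $\Gamma\vDash_{\mathcal M}\alpha$.
   Context: Formulas are built from a denumerable set of propositional variables by the unary connectives $\neg$, $\Box$ and the binary connective $\to$; $For$ is the set of all formulas. Abbreviations: $\Diamond\alpha:=\neg\Box\neg\alpha$, $\alpha\vee\beta:=\neg\alpha\to\beta$, $\alpha\wedge\beta:=\neg(\alpha\to\neg\beta)$. All Hilbert calculi below have as axioms all instances (over $For$) of the axiom schemas of a standard Hilbert calculus for classical propositional logic in the signature $\{\neg,\to\}$, plus the listed modal schemas, with modus ponens as the only rule; $\Gamma\vdash_{\bf L}\alpha$ means there is a derivation of $\alpha$ from $\Gamma$ in ${\bf L}$. ${\bf Tmd}$: (K) $\Box(\alpha\to\beta)\to(\Box\alpha\to\Box\beta)$; (Kdet) $\Box(\alpha\to\beta)\to(\Diamond\alpha\to\Box\beta)$; (K2) $\Diamond(\alpha\to\beta)\to(\Box\alpha\to\Diamond\beta)$; (M1) $\neg\Diamond\alpha\to\Box(\alpha\to\beta)$; (M2) $\Box\beta\to\Box(\alpha\to\beta)$; (M3) $\Diamond\beta\to\Diamond(\alpha\to\beta)$; (M4) $\Diamond\neg\alpha\to\Diamond(\alpha\to\beta)$; (T) $\Box\alpha\to\alpha$; (DN1) $\Box\alpha\to\Box\neg\neg\alpha$;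 (DN2) $\Box\neg\neg\alpha\to\Box\alpha$. ${\bf Tm4d}$ (also written ${\bf T4md}$) is ${\bf Tmd}$ plus (4) $\Box\alpha\to\Box\Box\alpha$. A (deterministic) logical matrix $\mathcal M=\langle M,D\rangle$ consists of a set $M$ with unary operations for $\neg,\Box$ and a binary operation for $\to$, and $D\subseteq M$; valuations are homomorphisms $h:For\to M$, and $\Gamma\vDash_{\mathcal M}\alpha$ iff every valuation mapping $\Gamma$ into $D$ maps $\alpha$ into $D$. *)

theory Defs
  imports Main
begin

datatype fm = Var nat | Neg fm | Box fm | Imp fm fm (infixr "\<^bold>\<rightarrow>" 25)

definition Dia :: "fm \<Rightarrow> fm" where "Dia a = Neg (Box (Neg a))"
definition Or :: "fm \<Rightarrow> fm \<Rightarrow> fm" where "Or a b = Imp (Neg a) b"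
definition And :: "fm \<Rightarrow> fm \<Rightarrow> fm" where "And a b = Neg (Imp a (Neg b))"

datatype logic = Tmd | Tm4d

inductive cpl_axiom :: "fm \<Rightarrow> bool" where
  A1: "cpl_axiom (a \<^bold>\<rightarrow> (b \<^bold>\<rightarrow> a))"
| A2: "cpl_axiom ((a \<^bold>\<rightarrow> (b \<^bold>\<rightarrow> c)) \<^bold>\<rightarrow> ((a \<^bold>\<rightarrow> b) \<^bold>\<rightarrow> (a \<^bold>\<rightarrow> c)))"
| A3: "cpl_axiom ((Neg b \<^bold>\<rightarrow> Neg a) \<^bold>\<rightarrow> ((Neg b \<^bold>\<rightarrow> a) \<^bold>\<rightarrow> b))"

inductive tmd_axiom :: "fm \<Rightarrow> bool" where
  K: "tmd_axiom (Box (a \<^bold>\<rightarrow> b) \<^bold>\<rightarrow> (Box a \<^bold>\<rightarrow> Box b))"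
| Kdet: "tmd_axiom (Box (a \<^bold>\<rightarrow> b) \<^bold>\<rightarrow> (Dia a \<^bold>\<rightarrow> Box b))"
| K2: "tmd_axiom (Dia (a \<^bold>\<rightarrow> b) \<^bold>\<rightarrow> (Box a \<^bold>\<rightarrow> Dia b))"
| M1: "tmd_axiom (Neg (Dia a) \<^bold>\<rightarrow> Box (a \<^bold>\<rightarrow> b))"
| M2: "tmd_axiom (Box b \<^bold>\<rightarrow> Box (a \<^bold>\<rightarrow> b))"
| M3: "tmd_axiom (Dia b \<^bold>\<rightarrow> Dia (a \<^bold>\<rightarrow> b))"
| M4: "tmd_axiom (Dia (Neg a) \<^bold>\<rightarrow> Dia (a \<^bold>\<rightarrow> b))"
| T: "tmd_axiom (Box a \<^bold>\<rightarrow> a)"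
| DN1: "tmd_axiom (Box a \<^bold>\<rightarrow> Box (Neg (Neg a)))"
| DN2: "tmd_axiom (Box (Neg (Neg a)) \<^bold>\<rightarrow> Box a)"

fun axiom :: "logic \<Rightarrow> fm \<Rightarrow> bool" where
  "axiom Tmd \<phi> \<longleftrightarrow> cpl_axiom \<phi> \<or> tmd_axiom \<phi>"
| "axiom Tm4d \<phi> \<longleftrightarrow> cpl_axiom \<phi> \<or> tmd_axiom \<phi> \<or> (\<exists>a. \<phi> = (Box a \<^bold>\<rightarrow> Box (Box a)))"

inductive derivable :: "logic \<Rightarrow> fm set \<Rightarrow> fm \<Rightarrow> bool" for L :: logic and \<Gamma> :: "fm set" where
  ax: "axiom L \<phi> \<Longrightarrow> derivable L \<Gamma> \<phi>"
| hyp: "\<phi> \<in> \<Gamma> \<Longrightarrow> derivable L \<Gamma> \<phi>"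
| mp: "derivable L \<Gamma> (a \<^bold>\<rightarrow> b) \<Longrightarrow> derivable L \<Gamma> a \<Longrightarrow> derivable L \<Gamma> b"

record 'a lmatrix =
  carrier :: "'a set"
  mneg :: "'a \<Rightarrow> 'a"
  mbox :: "'a \<Rightarrow> 'a"
  mimp :: "'a \<Rightarrow> 'a \<Rightarrow> 'a"
  designated :: "'a set"

definition is_matrix :: "('a, 'b) lmatrix_scheme \<Rightarrow> bool" where
  "is_matrix \<M> \<longleftrightarrow> designated \<M> \<subseteq> carrier \<M>
     \<and> (\<forall>x\<in>carrier \<M>. mneg \<M> x \<in> carrier \<M> \<and> mbox \<M> x \<in> carrier \<M>)
     \<and> (\<forall>x\<in>carrier \<M>. \<forall>y\<in>carrier \<M>. mimp \<M> x y \<in> carrier \<M>)"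

primrec eval :: "('a, 'b) lmatrix_scheme \<Rightarrow> (nat \<Rightarrow> 'a) \<Rightarrow> fm \<Rightarrow> 'a" where
  "eval \<M> v (Var n) = v n"
| "eval \<M> v (Neg a) = mneg \<M> (eval \<M> v a)"
| "eval \<M> v (Box a) = mbox \<M> (eval \<M> v a)"
| "eval \<M> v (Imp a b) = mimp \<M> (eval \<M> v a) (eval \<M> v b)"

definition valuation :: "('a, 'b) lmatrix_scheme \<Rightarrow> (fm \<Rightarrow> 'a) \<Rightarrow> bool" where
  "valuation \<M> h \<longleftrightarrow> (\<exists>v. range v \<subseteq> carrier \<M> \<and> h = eval \<M> v)"

definition matrix_conseq :: "('a, 'b) lmatrix_scheme \<Rightarrow> fm set \<Rightarrow> fm \<Rightarrow> bool" where
  "matrix_conseq \<M> \<Gamma> \<alpha> \<longleftrightarrow>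
     (\<forall>h. valuation \<M> h \<longrightarrow> h ` \<Gamma> \<subseteq> designated \<M> \<longrightarrow> h \<alpha> \<in> designated \<M>)"

definition characterizes :: "('a, 'b) lmatrix_scheme \<Rightarrow> logic \<Rightarrow> bool" where
  "characterizes \<M> L \<longleftrightarrow> (\<forall>\<Gamma> \<alpha>. derivable L \<Gamma> \<alpha> \<longleftrightarrow> matrix_conseq \<M> \<Gamma> \<alpha>)"

end

theory Submission
  imports Defs
begin

datatype v4 = VT | Vt | Vf | VF

fun tr :: "v4 \<Rightarrow> bool" where
  "tr VT = True" | "tr Vt = True" | "tr Vf = False" | "tr VF = False"

fun neg4 :: "v4 \<Rightarrow> v4" where
  "neg4 VT = VF" | "neg4 Vt = Vf" | "neg4 Vf = Vt" | "neg4 VF = VT"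

definition imp4 :: "v4 \<Rightarrow> v4 \<Rightarrow> v4" where
  "imp4 x y = (if x = VF \<or> y = VT then VT else if x = VT \<and> y = VF then VF
      else if tr x \<longrightarrow> tr y then Vt else Vf)"

definition box4 :: "v4 \<Rightarrow> bool \<Rightarrow> v4" where
  "box4 x b = (if x = VT then VT else if b then VF else Vf)"

primrec nv :: "(nat \<Rightarrow> v4) \<Rightarrow> (fm \<Rightarrow> bool) \<Rightarrow> fm \<Rightarrow> v4" where
  "nv a c (Var n) = a n"
| "nv a c (Neg x) = neg4 (nv a c x)"
| "nv a c (Box x) = box4 (nv a c x) (c x)"
| "nv a c (Imp x y) = imp4 (nv a c x) (nv a c y)"

lemma tr_imp: "tr (imp4 x y) = (tr x \<longrightarrow> tr y)"
  by (cases x; cases y; simp add: imp4_def)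

lemma tr_neg: "tr (neg4 x) = (\<not> tr x)"
  by (cases x; simp)

lemma tr_box: "tr (box4 x b) = (x = VT)"
  by (cases x; simp add: box4_def)

lemma imp4_VT: "(imp4 x y = VT) = (x = VF \<or> y = VT)"
  by (cases x; cases y; simp add: imp4_def)

lemma neg4_VT: "(neg4 x = VT) = (x = VF)"
  by (cases x; simp)

lemma neg4_VF: "(neg4 x = VF) = (x = VT)"
  by (cases x; simp)

lemma imp4_VF: "(imp4 x y = VF) = (x = VT \<and> y = VF)"
  by (cases x; cases y; simp add: imp4_def)

lemma cpl_sound: "cpl_axiom \<phi> \<Longrightarrow> tr (nv a c \<phi>)"
  by (induction rule: cpl_axiom.induct) (auto simp: tr_imp tr_neg)

lemma tmd_sound: "tmd_axiom \<phi> \<Longrightarrow> tr (nv a c \<phi>)"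
  by (induction rule: tmd_axiom.induct)
     (auto simp: tr_imp tr_neg tr_box Dia_def imp4_VT imp4_VF neg4_VT neg4_VF)

lemma ax_sound: "axiom S \<phi> \<Longrightarrow> tr (nv a c \<phi>)"
  by (cases S) (auto simp: cpl_sound tmd_sound tr_imp tr_box box4_def)

lemma sound: "derivable S \<Gamma> \<phi> \<Longrightarrow> (\<forall>\<psi>\<in>\<Gamma>. tr (nv a c \<psi>)) \<Longrightarrow> tr (nv a c \<phi>)"
  by (induction rule: derivable.induct) (auto simp: ax_sound tr_imp)


lemma d_id: "derivable S \<Gamma> (x \<^bold>\<rightarrow> x)"
proof -
  have 1: "derivable S \<Gamma> ((x \<^bold>\<rightarrow> ((x \<^bold>\<rightarrow> x) \<^bold>\<rightarrow> x)) \<^bold>\<rightarrow> ((x \<^bold>\<rightarrow> (x \<^bold>\<rightarrow> x)) \<^bold>\<rightarrow> (x \<^bold>\<rightarrow> x)))"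
    by (rule derivable.ax) (cases S, auto intro: cpl_axiom.intros)
  have 2: "derivable S \<Gamma> (x \<^bold>\<rightarrow> ((x \<^bold>\<rightarrow> x) \<^bold>\<rightarrow> x))"
    by (rule derivable.ax) (cases S, auto intro: cpl_axiom.intros)
  have 3: "derivable S \<Gamma> (x \<^bold>\<rightarrow> (x \<^bold>\<rightarrow> x))"
    by (rule derivable.ax) (cases S, auto intro: cpl_axiom.intros)
  show ?thesis using derivable.mp[OF derivable.mp[OF 1 2] 3] .
qed

definition Or2 :: "fm \<Rightarrow> fm \<Rightarrow> fm" where "Or2 a b = ((a \<^bold>\<rightarrow> b) \<^bold>\<rightarrow> b)"

lemma d_or1: "derivable S {a} (Or2 a b)"
proof -
  let ?Y = "a \<^bold>\<rightarrow> b"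
  have 1: "derivable S {a} ((?Y \<^bold>\<rightarrow> (a \<^bold>\<rightarrow> b)) \<^bold>\<rightarrow> ((?Y \<^bold>\<rightarrow> a) \<^bold>\<rightarrow> (?Y \<^bold>\<rightarrow> b)))"
    by (rule derivable.ax) (cases S, auto intro: cpl_axiom.intros)
  have 2: "derivable S {a} (a \<^bold>\<rightarrow> (?Y \<^bold>\<rightarrow> a))"
    by (rule derivable.ax) (cases S, auto intro: cpl_axiom.intros)
  have 3: "derivable S {a} a" by (rule derivable.hyp) simp
  show ?thesis unfolding Or2_def
    using derivable.mp[OF derivable.mp[OF 1 d_id] derivable.mp[OF 2 3]] .
qed

lemma d_or2: "derivable S {b} (Or2 a b)"
proof -
  have 2: "derivable S {b} (b \<^bold>\<rightarrow> ((a \<^bold>\<rightarrow> b) \<^bold>\<rightarrow> b))"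
    by (rule derivable.ax) (cases S, auto intro: cpl_axiom.intros)
  have 3: "derivable S {b} b" by (rule derivable.hyp) simp
  show ?thesis unfolding Or2_def using derivable.mp[OF 2 3] .
qed

definition bot :: fm where "bot = Neg (Var 0 \<^bold>\<rightarrow> Var 0)"

definition disj :: "fm list \<Rightarrow> fm" where "disj xs = foldr Or2 xs bot"

definition th :: "nat \<Rightarrow> fm \<Rightarrow> fm" where "th k = ((\<lambda>x. Neg (Box x)) ^^ k)"

lemma th_Suc: "th (Suc k) x = Neg (Box (th k x))"
  by (simp add: th_def)

lemma th_0: "th 0 x = x" by (simp add: th_def)

definition DD :: "nat \<Rightarrow> nat \<Rightarrow> fm" where
  "DD i j = (th (i+2) (Var j) \<^bold>\<rightarrow> th (i+2) (Var i))"

definition Delta :: "nat \<Rightarrow> fm" where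
  "Delta N = disj (concat (map (\<lambda>j. map (\<lambda>i. DD i j) [0..<j]) [0..<Suc N]))"

lemma th_inj: "th k (Var i) = th k' (Var i') \<Longrightarrow> k = k' \<and> i = i'"
proof (induction k arbitrary: k')
  case 0 then show ?case by (cases k') (auto simp: th_0 th_Suc)
next
  case (Suc k) then show ?case by (cases k') (auto simp: th_0 th_Suc)
qed

definition cc :: "fm \<Rightarrow> bool" where "cc A = (\<exists>i. A = th i (Var i))"

lemma nv_low: "k \<le> i \<Longrightarrow> nv (\<lambda>_. Vt) cc (th k (Var i)) = Vt"
proof (induction k)
  case 0 then show ?case by (simp add: th_0)
next
  case (Suc k)
  have "\<not> cc (th k (Var i))" using Suc.prems th_inj unfolding cc_def by fastforce
  then show ?case using Suc by (simp add: th_Suc box4_def)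
qed

lemma nv_top: "nv (\<lambda>_. Vt) cc (th (Suc i) (Var i)) = VT"
proof -
  have "cc (th i (Var i))" unfolding cc_def by blast
  then show ?thesis using nv_low[of i i] by (simp add: th_Suc box4_def)
qed

lemma nv_bot: "nv (\<lambda>_. Vt) cc (th (Suc (Suc i)) (Var i)) = VF"
  using nv_top[of i] by (simp add: th_Suc box4_def)

lemma tr_or2: "tr (nv a c (Or2 x y)) = (tr (nv a c x) \<or> tr (nv a c y))"
  by (auto simp: Or2_def tr_imp)

lemma tr_disj: "tr (nv a c (disj xs)) = (\<exists>x\<in>set xs. tr (nv a c x))"
  by (induction xs) (auto simp: disj_def bot_def tr_or2[unfolded Or2_def] tr_imp tr_neg Or2_def)

lemma DD_false: "i < j \<Longrightarrow> \<not> tr (nv (\<lambda>_. Vt) cc (DD i j))"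
proof -
  assume "i < j"
  then have "Suc (Suc i) \<le> j \<or> j = Suc i" by auto
  then have "tr (nv (\<lambda>_. Vt) cc (th (Suc (Suc i)) (Var j)))"
    using nv_low nv_top by auto
  then show ?thesis using nv_bot[of i] by (simp add: DD_def tr_imp)
qed

lemma Delta_not: "\<not> derivable S {} (Delta N)"
proof
  assume "derivable S {} (Delta N)"
  then have "tr (nv (\<lambda>_. Vt) cc (Delta N))" using sound by blast
  then show False using DD_false by (auto simp: Delta_def tr_disj)
qed


lemma eval_th: "v i = v j \<Longrightarrow> eval M v (th k (Var j)) = eval M v (th k (Var i))"
  by (induction k) (simp_all add: th_0 th_Suc)

lemma char_conseq: "characterizes M S \<Longrightarrow> derivable S {a} b \<Longrightarrow> valuation M h
   \<Longrightarrow> h a \<in> designated M \<Longrightarrow> h b \<in> designated M"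
  unfolding characterizes_def matrix_conseq_def by blast

lemma char_thm: "characterizes M S \<Longrightarrow> derivable S {} b \<Longrightarrow> valuation M h
   \<Longrightarrow> h b \<in> designated M"
  unfolding characterizes_def matrix_conseq_def by blast

lemma disj_des: "characterizes M S \<Longrightarrow> valuation M h \<Longrightarrow> x \<in> set xs \<Longrightarrow>
   h x \<in> designated M \<Longrightarrow> h (disj xs) \<in> designated M"
proof (induction xs)
  case Nil then show ?case by simp
next
  case (Cons y ys)
  show ?case
  proof (cases "x = y")
    case True
    then show ?thesis using Cons.prems char_conseq[OF _ d_or1] by (simp add: disj_def)
  next
    case False
    then have "h (disj ys) \<in> designated M" using Cons by simp
    then show ?thesis using Cons.prems char_conseq[OF _ d_or2] by (simp add: disj_def)
  qed
qed

theorem mainTheorem5: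
  fixes S :: logic and \<M> :: "'a lmatrix"
  assumes "S \<in> {Tmd, Tm4d}"
  assumes "is_matrix \<M>" and "finite (carrier \<M>)"
  shows "\<not> characterizes \<M> S"
proof
  assume ch: "characterizes \<M> S"
  define N where "N = card (carrier \<M>)"
  have "matrix_conseq \<M> {} (Delta N)"
    unfolding matrix_conseq_def
  proof (intro allI impI)
    fix h assume hv: "valuation \<M> h"
    then obtain v where v: "range v \<subseteq> carrier \<M>" "h = eval \<M> v"
      unfolding valuation_def by blast
    have "\<not> inj_on v {0..N}"
    proof
      assume "inj_on v {0..N}"
      then have "card (v ` {0..N}) = Suc N" by (simp add: card_image)
      moreover have "card (v ` {0..N}) \<le> N"
        unfolding N_def using v(1) assms(3) by (intro card_mono) auto
      ultimately show False by simp
    qed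
    then obtain i j where ij: "i \<le> N" "j \<le> N" "i \<noteq> j" "v i = v j"
      unfolding inj_on_def by auto
    then obtain i j where ij: "i < j" "j \<le> N" "v i = v j"
      by (metis linorder_neqE_nat)
    have "h (DD i j) \<in> designated \<M>"
    proof -
      have "h (DD i j) = h (th (i+2) (Var i) \<^bold>\<rightarrow> th (i+2) (Var i))"
        using v(2) eval_th[OF ij(3), of \<M> "i+2"] by (simp only: DD_def eval.simps)
      then show ?thesis using char_thm[OF ch d_id hv] by simp
    qed
    moreover have "DD i j \<in> set (concat (map (\<lambda>j. map (\<lambda>i. DD i j) [0..<j]) [0..<Suc N]))"
      using ij by (auto simp del: upt_Suc intro!: bexI[of _ j])
    ultimately show "h (Delta N) \<in> designated \<M>"
      unfolding Delta_def using disj_des[OF ch hv] by blast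
  qed
  then have "derivable S {} (Delta N)" using ch unfolding characterizes_def by blast
  then show False using Delta_not by blast
qed

end
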